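(* Let $C$ be a small category, $T$ an object of $C$, and let $\xi_*,\xi'_*:(X,f)\to(Y,g)$ be morphisms of the left fiber $(\Delta/C)/T$ such that $\xi_*\sim\xi'_*$ as morphisms of $\Delta/C$. Then $r(\xi_* )\sim r(\xi'_* )$.
   Context: For $q\ge0$, $[q]=\{0<\dots<q\}$. A $q$-simplex of the nerve $NC$ is a functor $X:[q]\to C$, i.e. a chain $X_0\to\dots\to X_q$; $q_X=q$; $X(i\to j)$ is the composite $X_i\to X_j$. $\Delta/C$ has all simplices as objects and as morphisms $X\to Y$ the order-preserving $\xi:[q_X]\to[q_Y]$ with $Y\circ\xi=X$, written $\xi_*$. For a $q$-simplex $X$ and surjective order-preserving $s:[q+1]\to[q]$ with order-preserving right inverses $d,d'$, $d_*,d'_*:X\to X\circ s$ are elementary equivalent; $\sim$ is the smallest equivalence relation on morphisms of $\Delta/C$ (with same source and target) compatible with composition containing all elementary equivalent pairs. $\sup:\Delta/C\to C$ sends $X$ to $X_{q_X}$ and $\xi_*:X\to Y$ to $Y(\xi(q_X)\to q_Y)$. The left fiber $(\Delta/C)/T$ has objects pairs $(X,f)$ with $f:X_{q_X}\to T$, and morphisms $(X,f)\to(Y,g)$ the morphisms $\xi_*:X\to Y$ of $\Delta/C$ with $g\circ\sup(\xi_* )=f$. For an object $(X,f)$, $r(X,f)$ is the $(q_X+1)$-simplex $X_0\to\dots\to X_{q_X}\xrightarrow{f}T$. For a morphism $\xi_*:(X,f)\to(Y,g)$, $r(\xi_* ):r(X,f)\to r(Y,g)$ is the morphism of $\Delta/C$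 given by the order-preserving map $[q_X+1]\to[q_Y+1]$ sending $j\mapsto\xi(j)$ for $0\le j\le q_X$ and $q_X+1\mapsto q_Y+1$. *)

theory Defs
  imports Main
begin

record ('o, 'm) category =
  Obj :: "'o set"
  Mor :: "'m set"
  Dom :: "'m \<Rightarrow> 'o"
  Cod :: "'m \<Rightarrow> 'o"
  Cmp :: "'m \<Rightarrow> 'm \<Rightarrow> 'm"
  Idt :: "'o \<Rightarrow> 'm"

definition is_category :: "('o, 'm) category \<Rightarrow> bool" where
  "is_category C \<longleftrightarrow>
     (\<forall>f \<in> Mor C. Dom C f \<in> Obj C \<and> Cod C f \<in> Obj C) \<and>
     (\<forall>a \<in> Obj C. Idt C a \<in> Mor C \<and> Dom C (Idt C a) = a \<and> Cod C (Idt C a) = a) \<and>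
     (\<forall>f \<in> Mor C. \<forall>g \<in> Mor C. Cod C f = Dom C g \<longrightarrow>
        Cmp C g f \<in> Mor C \<and> Dom C (Cmp C g f) = Dom C f \<and> Cod C (Cmp C g f) = Cod C g) \<and>
     (\<forall>f \<in> Mor C. Cmp C f (Idt C (Dom C f)) = f \<and> Cmp C (Idt C (Cod C f)) f = f) \<and>
     (\<forall>f \<in> Mor C. \<forall>g \<in> Mor C. \<forall>h \<in> Mor C. Cod C f = Dom C g \<longrightarrow> Cod C g = Dom C h \<longrightarrow>
        Cmp C h (Cmp C g f) = Cmp C (Cmp C h g) f)"

text \<open>A q-simplex X : [q] \<rightarrow> C is represented by (q, ob, ar) where ob i = X_i and
  ar i j = X(i \<rightarrow> j) for i \<le> j \<le> q; outside these ranges the values are undefined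
  (extensional representation, so that equality of simplices is equality of functors).\<close>

type_synonym ('o, 'm) simplex = "nat \<times> (nat \<Rightarrow> 'o) \<times> (nat \<Rightarrow> nat \<Rightarrow> 'm)"

definition qdim :: "('o, 'm) simplex \<Rightarrow> nat" where "qdim X = fst X"
definition sob :: "('o, 'm) simplex \<Rightarrow> nat \<Rightarrow> 'o" where "sob X = fst (snd X)"
definition sar :: "('o, 'm) simplex \<Rightarrow> nat \<Rightarrow> nat \<Rightarrow> 'm" where "sar X = snd (snd X)"

definition is_simplex :: "('o, 'm) category \<Rightarrow> ('o, 'm) simplex \<Rightarrow> bool" where
  "is_simplex C X \<longleftrightarrow>
     (\<forall>i \<le> qdim X. sob X i \<in> Obj C) \<and>
     (\<forall>i j. i \<le> j \<and> j \<le> qdim X \<longrightarrow>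
        sar X i j \<in> Mor C \<and> Dom C (sar X i j) = sob X i \<and> Cod C (sar X i j) = sob X j) \<and>
     (\<forall>i \<le> qdim X. sar X i i = Idt C (sob X i)) \<and>
     (\<forall>i j k. i \<le> j \<and> j \<le> k \<and> k \<le> qdim X \<longrightarrow> Cmp C (sar X j k) (sar X i j) = sar X i k) \<and>
     (\<forall>i. qdim X < i \<longrightarrow> sob X i = undefined) \<and>
     (\<forall>i j. \<not> (i \<le> j \<and> j \<le> qdim X) \<longrightarrow> sar X i j = undefined)"

definition precomp :: "('o, 'm) simplex \<Rightarrow> (nat \<Rightarrow> nat) \<Rightarrow> nat \<Rightarrow> ('o, 'm) simplex" where
  "precomp Y \<xi> q =
     (q, (\<lambda>i. if i \<le> q then sob Y (\<xi> i) else undefined),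
         (\<lambda>i j. if i \<le> j \<and> j \<le> q then sar Y (\<xi> i) (\<xi> j) else undefined))"

text \<open>A morphism \<xi>_* : X \<rightarrow> Y of \<Delta>/C is represented by the triple (X, \<xi>, Y), with \<xi>
  extensional (undefined outside [q_X]).\<close>

type_synonym ('o, 'm) dmor = "('o, 'm) simplex \<times> (nat \<Rightarrow> nat) \<times> ('o, 'm) simplex"

definition is_dmor :: "('o, 'm) category \<Rightarrow> ('o, 'm) dmor \<Rightarrow> bool" where
  "is_dmor C m \<longleftrightarrow> (case m of (X, \<xi>, Y) \<Rightarrow>
     is_simplex C X \<and> is_simplex C Y \<and>
     (\<forall>i \<le> qdim X. \<xi> i \<le> qdim Y) \<and>
     (\<forall>i j. i \<le> j \<and> j \<le> qdim X \<longrightarrow> \<xi> i \<le> \<xi> j) \<and>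
     (\<forall>i. qdim X < i \<longrightarrow> \<xi> i = undefined) \<and>
     precomp Y \<xi> (qdim X) = X)"

definition dcomp :: "('o, 'm) dmor \<Rightarrow> ('o, 'm) dmor \<Rightarrow> ('o, 'm) dmor" where
  "dcomp n m = (case m of (X, \<xi>, Y) \<Rightarrow> case n of (Y', \<eta>, Z) \<Rightarrow>
     (X, (\<lambda>i. if i \<le> qdim X then \<eta> (\<xi> i) else undefined), Z))"

text \<open>Elementary equivalence: X a q-simplex, s : [q+1] \<rightarrow> [q] surjective order preserving,
  d, d' order-preserving right inverses of s; then d_*, d'_* : X \<rightarrow> X o s.\<close>

definition elem_equiv :: "('o, 'm) category \<Rightarrow> ('o, 'm) dmor \<Rightarrow> ('o, 'm) dmor \<Rightarrow> bool" where
  "elem_equiv C m m' \<longleftrightarrow>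
     (\<exists>X s d d'. is_simplex C X \<and>
        (\<forall>i \<le> Suc (qdim X). s i \<le> qdim X) \<and>
        (\<forall>i j. i \<le> j \<and> j \<le> Suc (qdim X) \<longrightarrow> s i \<le> s j) \<and>
        (\<forall>k \<le> qdim X. \<exists>i \<le> Suc (qdim X). s i = k) \<and>
        (\<forall>i \<le> qdim X. d i \<le> Suc (qdim X) \<and> d' i \<le> Suc (qdim X)) \<and>
        (\<forall>i j. i \<le> j \<and> j \<le> qdim X \<longrightarrow> d i \<le> d j \<and> d' i \<le> d' j) \<and>
        (\<forall>i \<le> qdim X. s (d i) = i \<and> s (d' i) = i) \<and>
        m = (X, (\<lambda>i. if i \<le> qdim X then d i else undefined), precomp X s (Suc (qdim X))) \<and>
        m' = (X, (\<lambda>i. if i \<le> qdim X then d' i else undefined), precomp X s (Suc (qdim X))))"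

inductive dequiv :: "('o, 'm) category \<Rightarrow> ('o, 'm) dmor \<Rightarrow> ('o, 'm) dmor \<Rightarrow> bool"
  for C :: "('o, 'm) category" where
  elem: "elem_equiv C m m' \<Longrightarrow> dequiv C m m'"
| refl: "is_dmor C m \<Longrightarrow> dequiv C m m"
| sym: "dequiv C m m' \<Longrightarrow> dequiv C m' m"
| trans: "dequiv C m m' \<Longrightarrow> dequiv C m' m'' \<Longrightarrow> dequiv C m m''"
| comp_left: "dequiv C m m' \<Longrightarrow> is_dmor C n \<Longrightarrow> fst n = snd (snd m) \<Longrightarrow>
     dequiv C (dcomp n m) (dcomp n m')"
| comp_right: "dequiv C m m' \<Longrightarrow> is_dmor C k \<Longrightarrow> snd (snd k) = fst m \<Longrightarrow>
     dequiv C (dcomp m k) (dcomp m' k)"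

definition sup_ob :: "('o, 'm) simplex \<Rightarrow> 'o" where
  "sup_ob X = sob X (qdim X)"

definition sup_mor :: "('o, 'm) dmor \<Rightarrow> 'm" where
  "sup_mor m = (case m of (X, \<xi>, Y) \<Rightarrow> sar Y (\<xi> (qdim X)) (qdim Y))"

definition fiber_obj :: "('o, 'm) category \<Rightarrow> 'o \<Rightarrow> ('o, 'm) simplex \<Rightarrow> 'm \<Rightarrow> bool" where
  "fiber_obj C T X f \<longleftrightarrow> is_simplex C X \<and> f \<in> Mor C \<and> Dom C f = sup_ob X \<and> Cod C f = T"

definition fiber_mor :: "('o, 'm) category \<Rightarrow> 'o \<Rightarrow> ('o, 'm) simplex \<Rightarrow> 'm \<Rightarrow>
    (nat \<Rightarrow> nat) \<Rightarrow> ('o, 'm) simplex \<Rightarrow> 'm \<Rightarrow> bool" where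
  "fiber_mor C T X f \<xi> Y g \<longleftrightarrow> fiber_obj C T X f \<and> fiber_obj C T Y g \<and>
     is_dmor C (X, \<xi>, Y) \<and> Cmp C g (sup_mor (X, \<xi>, Y)) = f"

definition r_obj :: "('o, 'm) category \<Rightarrow> 'o \<Rightarrow> ('o, 'm) simplex \<Rightarrow> 'm \<Rightarrow> ('o, 'm) simplex" where
  "r_obj C T X f =
     (Suc (qdim X),
      (\<lambda>i. if i \<le> qdim X then sob X i else if i = Suc (qdim X) then T else undefined),
      (\<lambda>i j. if i \<le> j \<and> j \<le> qdim X then sar X i j
             else if i \<le> qdim X \<and> j = Suc (qdim X) then Cmp C f (sar X i (qdim X))
             else if i = Suc (qdim X) \<and> j = Suc (qdim X) then Idt C T
             else undefined))"

definition r_map :: "nat \<Rightarrow> nat \<Rightarrow> (nat \<Rightarrow> nat) \<Rightarrow> nat \<Rightarrow> nat" where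
  "r_map qX qY \<xi> = (\<lambda>j. if j \<le> qX then \<xi> j else if j = Suc qX then Suc qY else undefined)"

definition r_mor :: "('o, 'm) category \<Rightarrow> 'o \<Rightarrow> ('o, 'm) simplex \<Rightarrow> 'm \<Rightarrow>
    (nat \<Rightarrow> nat) \<Rightarrow> ('o, 'm) simplex \<Rightarrow> 'm \<Rightarrow> ('o, 'm) dmor" where
  "r_mor C T X f \<xi> Y g = (r_obj C T X f, r_map (qdim X) (qdim Y) \<xi>, r_obj C T Y g)"

end

theory Submission imports Defs begin

lemma simplex_precomp:
  assumes "is_simplex C Y" "\<forall>i\<le>q. \<xi> i \<le> qdim Y" "\<forall>i j. i \<le> j \<and> j \<le> q \<longrightarrow> \<xi> i \<le> \<xi> j"
  shows "is_simplex C (precomp Y \<xi> q)"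
  using assms unfolding is_simplex_def precomp_def qdim_def sob_def sar_def
  by (auto; meson le_trans)

lemma precomp_sob: "precomp Y \<xi> q = X \<Longrightarrow> i \<le> q \<Longrightarrow> sob X i = sob Y (\<xi> i)"
  by (auto simp: precomp_def sob_def)
lemma precomp_sar: "precomp Y \<xi> q = X \<Longrightarrow> i \<le> j \<Longrightarrow> j \<le> q \<Longrightarrow> sar X i j = sar Y (\<xi> i) (\<xi> j)"
  by (auto simp: precomp_def sar_def)
lemma precomp_q: "precomp Y \<xi> q = X \<Longrightarrow> qdim X = q"
  by (auto simp: precomp_def qdim_def)

lemma dmorD:
  assumes "is_dmor C (X,\<xi>,Y)"
  shows "is_simplex C X" "is_simplex C Y" "\<And>i. i \<le> qdim X \<Longrightarrow> \<xi> i \<le> qdim Y"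
    "\<And>i j. i \<le> j \<Longrightarrow> j \<le> qdim X \<Longrightarrow> \<xi> i \<le> \<xi> j" "\<And>i. qdim X < i \<Longrightarrow> \<xi> i = undefined"
    "precomp Y \<xi> (qdim X) = X"
  using assms by (auto simp: is_dmor_def)

lemma dmor_dcomp:
  assumes "is_dmor C (X,\<xi>,Y)" "is_dmor C (Y,\<eta>,Z)"
  shows "is_dmor C (dcomp (Y,\<eta>,Z) (X,\<xi>,Y))"
proof -
  note a = dmorD[OF assms(1)] and b = dmorD[OF assms(2)]
  have "precomp Z (\<lambda>i. if i \<le> qdim X then \<eta> (\<xi> i) else undefined) (qdim X) = precomp Y \<xi> (qdim X)"
    unfolding precomp_def
    using precomp_sob[OF b(6)] precomp_sar[OF b(6)] a(3,4)
    by (auto intro!: ext)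
  with a b show ?thesis unfolding is_dmor_def dcomp_def by (auto; meson le_trans)
qed


context fixes C :: "('o,'m) category" assumes cat: "is_category C" begin
lemma cat_dom: "f \<in> Mor C \<Longrightarrow> Dom C f \<in> Obj C" using cat by (auto simp: is_category_def)
lemma cat_cod: "f \<in> Mor C \<Longrightarrow> Cod C f \<in> Obj C" using cat by (auto simp: is_category_def)
lemma cat_id: "a \<in> Obj C \<Longrightarrow> Idt C a \<in> Mor C" "a \<in> Obj C \<Longrightarrow> Dom C (Idt C a) = a" "a \<in> Obj C \<Longrightarrow> Cod C (Idt C a) = a"
  using cat by (auto simp: is_category_def)
lemma cat_cmp: "f \<in> Mor C \<Longrightarrow> g \<in> Mor C \<Longrightarrow> Cod C f = Dom C g \<Longrightarrow> Cmp C g f \<in> Mor C"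
  "f \<in> Mor C \<Longrightarrow> g \<in> Mor C \<Longrightarrow> Cod C f = Dom C g \<Longrightarrow> Dom C (Cmp C g f) = Dom C f"
  "f \<in> Mor C \<Longrightarrow> g \<in> Mor C \<Longrightarrow> Cod C f = Dom C g \<Longrightarrow> Cod C (Cmp C g f) = Cod C g"
  using cat by (auto simp: is_category_def)
lemma cat_idl: "f \<in> Mor C \<Longrightarrow> Cod C f = a \<Longrightarrow> Cmp C (Idt C a) f = f" using cat by (auto simp: is_category_def)
lemma cat_idr: "f \<in> Mor C \<Longrightarrow> Dom C f = a \<Longrightarrow> Cmp C f (Idt C a) = f" using cat by (auto simp: is_category_def)
lemma cat_assoc: "f \<in> Mor C \<Longrightarrow> g \<in> Mor C \<Longrightarrow> h \<in> Mor C \<Longrightarrow> Cod C f = Dom C g \<Longrightarrow> Cod C g = Dom C h \<Longrightarrow>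
        Cmp C h (Cmp C g f) = Cmp C (Cmp C h g) f" using cat unfolding is_category_def by blast
end

lemma simplexD:
  assumes "is_simplex C X"
  shows "\<And>i. i \<le> qdim X \<Longrightarrow> sob X i \<in> Obj C"
   "\<And>i j. i \<le> j \<Longrightarrow> j \<le> qdim X \<Longrightarrow> sar X i j \<in> Mor C"
   "\<And>i j. i \<le> j \<Longrightarrow> j \<le> qdim X \<Longrightarrow> Dom C (sar X i j) = sob X i"
   "\<And>i j. i \<le> j \<Longrightarrow> j \<le> qdim X \<Longrightarrow> Cod C (sar X i j) = sob X j"
   "\<And>i. i \<le> qdim X \<Longrightarrow> sar X i i = Idt C (sob X i)"
   "\<And>i j k. i \<le> j \<Longrightarrow> j \<le> k \<Longrightarrow> k \<le> qdim X \<Longrightarrow> Cmp C (sar X j k) (sar X i j) = sar X i k"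
   "\<And>i. qdim X < i \<Longrightarrow> sob X i = undefined"
   "\<And>i j. \<not> (i \<le> j \<and> j \<le> qdim X) \<Longrightarrow> sar X i j = undefined"
  using assms unfolding is_simplex_def by blast+

lemma sup_mor_typ:
  assumes "is_dmor C (X,\<xi>,Y)"
  shows "sup_mor (X,\<xi>,Y) \<in> Mor C" "Dom C (sup_mor (X,\<xi>,Y)) = sup_ob X" "Cod C (sup_mor (X,\<xi>,Y)) = sup_ob Y"
proof -
  note a = dmorD[OF assms]
  have q: "\<xi> (qdim X) \<le> qdim Y" using a(3) by simp
  show "sup_mor (X,\<xi>,Y) \<in> Mor C" "Cod C (sup_mor (X,\<xi>,Y)) = sup_ob Y"
    using simplexD(2,4)[OF a(2) q] by (auto simp: sup_mor_def sup_ob_def)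
  show "Dom C (sup_mor (X,\<xi>,Y)) = sup_ob X"
    using simplexD(3)[OF a(2) q] precomp_sob[OF a(6), of "qdim X"] by (auto simp: sup_mor_def sup_ob_def)
qed

lemma sup_dcomp:
  assumes "is_category C" "is_dmor C (X,\<xi>,Y)" "is_dmor C (Y,\<eta>,Z)"
  shows "sup_mor (dcomp (Y,\<eta>,Z) (X,\<xi>,Y)) = Cmp C (sup_mor (Y,\<eta>,Z)) (sup_mor (X,\<xi>,Y))"
proof -
  note a = dmorD[OF assms(2)] and b = dmorD[OF assms(3)]
  have q: "\<xi> (qdim X) \<le> qdim Y" using a(3) by simp
  have "sar Y (\<xi> (qdim X)) (qdim Y) = sar Z (\<eta> (\<xi> (qdim X))) (\<eta> (qdim Y))"
    using precomp_sar[OF b(6) q] by simp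
  moreover have "\<eta> (\<xi> (qdim X)) \<le> \<eta> (qdim Y)" "\<eta> (qdim Y) \<le> qdim Z" using b(3,4) q by auto
  ultimately show ?thesis using simplexD(6)[OF b(2)]
    by (simp add: sup_mor_def dcomp_def)
qed


lemma s_top:
  assumes "\<forall>i \<le> Suc q. s i \<le> q" "\<forall>i j. i \<le> j \<and> j \<le> Suc q \<longrightarrow> s i \<le> s j"
    "\<forall>k \<le> q. \<exists>i \<le> Suc q. s i = k"
  shows "s (Suc q) = q"
proof -
  obtain i where "i \<le> Suc q" "s i = q" using assms(3) by blast
  then have "q \<le> s (Suc q)" using assms(2) by (metis order_refl)
  with assms(1) show ?thesis by (meson antisym le_refl)
qed

lemma elem_dmor:
  assumes X: "is_simplex C X" and s1: "\<forall>i \<le> Suc (qdim X). s i \<le> qdim X"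
    and s2: "\<forall>i j. i \<le> j \<and> j \<le> Suc (qdim X) \<longrightarrow> s i \<le> s j"
    and s3: "\<forall>k \<le> qdim X. \<exists>i \<le> Suc (qdim X). s i = k"
    and d1: "\<forall>i \<le> qdim X. d i \<le> Suc (qdim X)"
    and d2: "\<forall>i j. i \<le> j \<and> j \<le> qdim X \<longrightarrow> d i \<le> d j"
    and d3: "\<forall>i \<le> qdim X. s (d i) = i"
  shows "is_dmor C (X, (\<lambda>i. if i \<le> qdim X then d i else undefined), precomp X s (Suc (qdim X)))"
    "sup_mor (X, (\<lambda>i. if i \<le> qdim X then d i else undefined), precomp X s (Suc (qdim X))) = Idt C (sob X (qdim X))"
proof -
  have Z: "is_simplex C (precomp X s (Suc (qdim X)))"
    by (rule simplex_precomp[OF X s1 s2])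
  have qZ: "qdim (precomp X s (Suc (qdim X))) = Suc (qdim X)" by (simp add: precomp_def qdim_def)
  have "precomp (precomp X s (Suc (qdim X))) (\<lambda>i. if i \<le> qdim X then d i else undefined) (qdim X) = X"
  proof -
    have e: "X = (qdim X, sob X, sar X)" by (simp add: qdim_def sob_def sar_def)
    have "(\<lambda>i. if i \<le> qdim X then sob (precomp X s (Suc (qdim X))) (if i \<le> qdim X then d i else undefined) else undefined) = sob X"
      using simplexD(7)[OF X] d1 d3 by (auto intro!: ext simp: precomp_def sob_def)
    moreover have "(\<lambda>i j. if i \<le> j \<and> j \<le> qdim X then sar (precomp X s (Suc (qdim X))) (if i \<le> qdim X then d i else undefined) (if j \<le> qdim X then d j else undefined) else undefined) = sar X"
      using simplexD(8)[OF X] d1 d2 d3 by (auto intro!: ext simp: precomp_def sar_def)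
    ultimately have "precomp (precomp X s (Suc (qdim X))) (\<lambda>i. if i \<le> qdim X then d i else undefined) (qdim X) = (qdim X, sob X, sar X)"
      by (simp add: precomp_def[of _ _ "qdim X"])
    then show ?thesis using e by simp
  qed
  then show "is_dmor C (X, (\<lambda>i. if i \<le> qdim X then d i else undefined), precomp X s (Suc (qdim X)))"
    unfolding is_dmor_def using X Z qZ d1 d2 by auto
  have st: "s (Suc (qdim X)) = qdim X" using s_top[OF s1 s2 s3] .
  show "sup_mor (X, (\<lambda>i. if i \<le> qdim X then d i else undefined), precomp X s (Suc (qdim X))) = Idt C (sob X (qdim X))"
  proof -
    have "sup_mor (X, (\<lambda>i. if i \<le> qdim X then d i else undefined), precomp X s (Suc (qdim X)))
        = sar (precomp X s (Suc (qdim X))) (d (qdim X)) (Suc (qdim X))"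
      by (simp add: sup_mor_def qZ)
    also have "\<dots> = sar X (s (d (qdim X))) (s (Suc (qdim X)))"
      using precomp_sar[OF HOL.refl, where Y=X and \<xi>=s and q="Suc (qdim X)" and i="d (qdim X)" and j="Suc (qdim X)"] d1 by simp
    also have "\<dots> = Idt C (sob X (qdim X))" using st d3 simplexD(5)[OF X] by simp
    finally show ?thesis .
  qed
qed

lemma dequiv_inv:
  assumes "is_category C" "dequiv C m m'"
  shows "is_dmor C m \<and> is_dmor C m' \<and> fst m = fst m' \<and> snd (snd m) = snd (snd m') \<and> sup_mor m = sup_mor m'"
  using assms(2)
proof induction
  case (elem m m')
  then obtain X s d d' where H: "is_simplex C X"
        "(\<forall>i \<le> Suc (qdim X). s i \<le> qdim X)"
        "(\<forall>i j. i \<le> j \<and> j \<le> Suc (qdim X) \<longrightarrow> s i \<le> s j)"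
        "(\<forall>k \<le> qdim X. \<exists>i \<le> Suc (qdim X). s i = k)"
        "(\<forall>i \<le> qdim X. d i \<le> Suc (qdim X) \<and> d' i \<le> Suc (qdim X))"
        "(\<forall>i j. i \<le> j \<and> j \<le> qdim X \<longrightarrow> d i \<le> d j \<and> d' i \<le> d' j)"
        "(\<forall>i \<le> qdim X. s (d i) = i \<and> s (d' i) = i)"
        "m = (X, (\<lambda>i. if i \<le> qdim X then d i else undefined), precomp X s (Suc (qdim X)))"
        "m' = (X, (\<lambda>i. if i \<le> qdim X then d' i else undefined), precomp X s (Suc (qdim X)))"
    unfolding elem_equiv_def by blast
  have "\<forall>i \<le> qdim X. d i \<le> Suc (qdim X)" "\<forall>i \<le> qdim X. d' i \<le> Suc (qdim X)" using H(5) by auto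
  moreover have "\<forall>i j. i \<le> j \<and> j \<le> qdim X \<longrightarrow> d i \<le> d j" "\<forall>i j. i \<le> j \<and> j \<le> qdim X \<longrightarrow> d' i \<le> d' j" using H(6) by auto
  moreover have "\<forall>i \<le> qdim X. s (d i) = i" "\<forall>i \<le> qdim X. s (d' i) = i" using H(7) by auto
  ultimately show ?case using elem_dmor[OF H(1-4), of d] elem_dmor[OF H(1-4), of d'] H(8,9) by auto
next
  case (refl m) then show ?case by simp
next
  case (sym m m') then show ?case by simp
next
  case (trans m m' m'') then show ?case by simp
next
  case (comp_left m m' n)
  obtain X \<xi> Y where m: "m = (X,\<xi>,Y)" by (cases m) auto
  obtain X' \<xi>' Y' where m': "m' = (X',\<xi>',Y')" by (cases m') auto
  obtain Y2 \<eta> Z where n: "n = (Y2,\<eta>,Z)" by (cases n) auto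
  from comp_left m m' n have e: "X' = X" "Y' = Y" "Y2 = Y" by auto
  have h: "is_dmor C (X,\<xi>,Y)" "is_dmor C (X,\<xi>',Y)" "is_dmor C (Y,\<eta>,Z)" "sup_mor (X,\<xi>,Y) = sup_mor (X,\<xi>',Y)"
    using comp_left unfolding m m' n e by auto
  show ?case unfolding m m' n e
    using dmor_dcomp[OF h(1,3)] dmor_dcomp[OF h(2,3)] sup_dcomp[OF assms(1) h(1,3)] sup_dcomp[OF assms(1) h(2,3)] h(4)
    by (simp add: dcomp_def)
next
  case (comp_right m m' k)
  obtain X \<xi> Y where m: "m = (X,\<xi>,Y)" by (cases m) auto
  obtain X' \<xi>' Y' where m': "m' = (X',\<xi>',Y')" by (cases m') auto
  obtain W \<eta> X2 where k: "k = (W,\<eta>,X2)" by (cases k) auto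
  from comp_right m m' k have e: "X' = X" "Y' = Y" "X2 = X" by auto
  have h: "is_dmor C (X,\<xi>,Y)" "is_dmor C (X,\<xi>',Y)" "is_dmor C (W,\<eta>,X)" "sup_mor (X,\<xi>,Y) = sup_mor (X,\<xi>',Y)"
    using comp_right unfolding m m' k e by auto
  show ?case unfolding m m' k e
    using dmor_dcomp[OF h(3,1)] dmor_dcomp[OF h(3,2)] sup_dcomp[OF assms(1) h(3,1)] sup_dcomp[OF assms(1) h(3,2)] h(4)
    by (simp add: dcomp_def)
qed


lemma r_q[simp]: "qdim (r_obj C T X f) = Suc (qdim X)" by (simp add: r_obj_def qdim_def)
lemma r_sob: "sob (r_obj C T X f) i = (if i \<le> qdim X then sob X i else if i = Suc (qdim X) then T else undefined)"
  by (simp add: r_obj_def sob_def)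
lemma r_sar: "sar (r_obj C T X f) i j = (if i \<le> j \<and> j \<le> qdim X then sar X i j
             else if i \<le> qdim X \<and> j = Suc (qdim X) then Cmp C f (sar X i (qdim X))
             else if i = Suc (qdim X) \<and> j = Suc (qdim X) then Idt C T
             else undefined)"
  by (simp add: r_obj_def sar_def)

lemma r_simplex:
  assumes cat: "is_category C" and T: "T \<in> Obj C" and X: "is_simplex C X"
    and f: "f \<in> Mor C" "Dom C f = sob X (qdim X)" "Cod C f = T"
  shows "is_simplex C (r_obj C T X f)"
proof -
  note x = simplexD[OF X]
  let ?q = "qdim X"
  have xq: "\<And>i. i \<le> ?q \<Longrightarrow> sar X i ?q \<in> Mor C \<and> Cod C (sar X i ?q) = Dom C f \<and> Dom C (sar X i ?q) = sob X i"
    using x f by auto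
  have A: "\<forall>i \<le> Suc ?q. sob (r_obj C T X f) i \<in> Obj C" using x(1) T by (auto simp: r_sob le_Suc_eq)
  have B: "\<forall>i j. i \<le> j \<and> j \<le> Suc ?q \<longrightarrow> sar (r_obj C T X f) i j \<in> Mor C \<and>
      Dom C (sar (r_obj C T X f) i j) = sob (r_obj C T X f) i \<and> Cod C (sar (r_obj C T X f) i j) = sob (r_obj C T X f) j"
  proof (intro allI impI)
    fix i j assume ij: "i \<le> j \<and> j \<le> Suc ?q"
    show "sar (r_obj C T X f) i j \<in> Mor C \<and>
      Dom C (sar (r_obj C T X f) i j) = sob (r_obj C T X f) i \<and> Cod C (sar (r_obj C T X f) i j) = sob (r_obj C T X f) j"
    proof (cases "j \<le> ?q")
      case True then show ?thesis using ij x(2,3,4) by (auto simp: r_sob r_sar)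
    next
      case False then have j: "j = Suc ?q" using ij by auto
      show ?thesis
      proof (cases "i \<le> ?q")
        case True then show ?thesis using j xq[OF True] f cat_cmp[OF cat] by (auto simp: r_sob r_sar)
      next
        case False then show ?thesis using j ij cat_id[OF cat T] by (auto simp: r_sob r_sar)
      qed
    qed
  qed
  have Cc: "\<forall>i \<le> Suc ?q. sar (r_obj C T X f) i i = Idt C (sob (r_obj C T X f) i)"
    using x(5) by (auto simp: r_sob r_sar le_Suc_eq)
  have D: "\<forall>i j k. i \<le> j \<and> j \<le> k \<and> k \<le> Suc ?q \<longrightarrow>
     Cmp C (sar (r_obj C T X f) j k) (sar (r_obj C T X f) i j) = sar (r_obj C T X f) i k"
  proof (intro allI impI)
    fix i j k assume ijk: "i \<le> j \<and> j \<le> k \<and> k \<le> Suc ?q"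
    show "Cmp C (sar (r_obj C T X f) j k) (sar (r_obj C T X f) i j) = sar (r_obj C T X f) i k"
    proof (cases "k \<le> ?q")
      case True then show ?thesis using ijk x(6) by (auto simp: r_sar)
    next
      case False then have k: "k = Suc ?q" using ijk by auto
      show ?thesis
      proof (cases "j \<le> ?q")
        case True
        then have "Cmp C (Cmp C f (sar X j ?q)) (sar X i j) = Cmp C f (Cmp C (sar X j ?q) (sar X i j))"
          using ijk xq[OF True] x(2,4) f by (intro cat_assoc[OF cat, symmetric]) auto
        also have "\<dots> = Cmp C f (sar X i ?q)" using ijk True x(6) by auto
        finally show ?thesis using k True ijk by (auto simp: r_sar)
      next
        case False then have j: "j = Suc ?q" using ijk by auto
        show ?thesis
        proof (cases "i \<le> ?q")
          case True then show ?thesis using j k xq[OF True] f cat_cmp[OF cat] cat_idl[OF cat]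
            by (auto simp: r_sar)
        next
          case False then show ?thesis using j k ijk cat_idl[OF cat] cat_id[OF cat T] by (auto simp: r_sar)
        qed
      qed
    qed
  qed
  have E: "\<forall>i. Suc ?q < i \<longrightarrow> sob (r_obj C T X f) i = undefined" by (auto simp: r_sob)
  have F: "\<forall>i j. \<not> (i \<le> j \<and> j \<le> Suc ?q) \<longrightarrow> sar (r_obj C T X f) i j = undefined"
    by (auto simp: r_sar)
  show ?thesis unfolding is_simplex_def r_q using A B Cc D E F by blast
qed


definition Rg :: "('o,'m) category \<Rightarrow> 'o \<Rightarrow> 'm \<Rightarrow> ('o,'m) dmor \<Rightarrow> ('o,'m) dmor" where
  "Rg C T g m = (case m of (X,\<xi>,Y) \<Rightarrow> r_mor C T X (Cmp C g (sup_mor m)) \<xi> Y g)"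

lemma Rg_dmor:
  assumes cat: "is_category C" and T: "T \<in> Obj C" and m: "is_dmor C (X,\<xi>,Y)"
    and g: "g \<in> Mor C" "Dom C g = sup_ob Y" "Cod C g = T"
  shows "is_dmor C (Rg C T g (X,\<xi>,Y))"
proof -
  note a = dmorD[OF m] and st = sup_mor_typ[OF m]
  note x = simplexD[OF a(1)] and y = simplexD[OF a(2)]
  define f where "f = Cmp C g (sup_mor (X,\<xi>,Y))"
  have f: "f \<in> Mor C" "Dom C f = sob X (qdim X)" "Cod C f = T"
    using cat_cmp[OF cat] st g unfolding f_def by (auto simp: sup_ob_def)
  have rx: "is_simplex C (r_obj C T X f)" by (rule r_simplex[OF cat T a(1) f])
  have ry: "is_simplex C (r_obj C T Y g)" by (rule r_simplex[OF cat T a(2)]) (use g in \<open>auto simp: sup_ob_def\<close>)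
  let ?p = "qdim X" and ?q = "qdim Y"
  have sm: "sup_mor (X,\<xi>,Y) = sar Y (\<xi> ?p) ?q" by (simp add: sup_mor_def)
  have key: "\<And>i. i \<le> ?p \<Longrightarrow> Cmp C g (sar Y (\<xi> i) ?q) = Cmp C f (sar X i ?p)"
  proof -
    fix i assume i: "i \<le> ?p"
    have xi: "\<xi> i \<le> \<xi> ?p" "\<xi> ?p \<le> ?q" using a(3,4) i by auto
    have "Cmp C f (sar X i ?p) = Cmp C (Cmp C g (sar Y (\<xi> ?p) ?q)) (sar Y (\<xi> i) (\<xi> ?p))"
      unfolding f_def sm using precomp_sar[OF a(6) i] by simp
    also have "\<dots> = Cmp C g (Cmp C (sar Y (\<xi> ?p) ?q) (sar Y (\<xi> i) (\<xi> ?p)))"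
      using xi y(2,3,4) g by (intro cat_assoc[OF cat, symmetric]) (auto simp: sup_ob_def)
    also have "\<dots> = Cmp C g (sar Y (\<xi> i) ?q)" using xi y(6) by simp
    finally show "Cmp C g (sar Y (\<xi> i) ?q) = Cmp C f (sar X i ?p)" by simp
  qed
  have pc: "precomp (r_obj C T Y g) (r_map ?p ?q \<xi>) (Suc ?p) = r_obj C T X f"
    unfolding precomp_def r_obj_def[of C T X f]
  proof (simp, intro conjI ext)
    fix i show "(if i \<le> Suc ?p then sob (r_obj C T Y g) (r_map ?p ?q \<xi> i) else undefined) =
      (if i \<le> ?p then sob X i else if i = Suc ?p then T else undefined)"
      using a(3) precomp_sob[OF a(6)] by (auto simp: r_sob r_map_def)
  next
    fix i j show "(if i \<le> j \<and> j \<le> Suc ?p then sar (r_obj C T Y g) (r_map ?p ?q \<xi> i) (r_map ?p ?q \<xi> j) else undefined) =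
      (if i \<le> j \<and> j \<le> ?p then sar X i j else if i \<le> ?p \<and> j = Suc ?p then Cmp C f (sar X i ?p)
       else if i = Suc ?p \<and> j = Suc ?p then Idt C T else undefined)"
      using a(3,4) precomp_sar[OF a(6)] key by (auto simp: r_sar r_map_def)
  qed
  have rm: "\<forall>i \<le> Suc ?p. r_map ?p ?q \<xi> i \<le> Suc ?q" using a(3) by (auto simp: r_map_def le_Suc_eq)
  have rm2: "\<forall>i j. i \<le> j \<and> j \<le> Suc ?p \<longrightarrow> r_map ?p ?q \<xi> i \<le> r_map ?p ?q \<xi> j"
    using a(3,4) by (auto simp: r_map_def le_Suc_eq)
  have rm3: "\<forall>i. Suc ?p < i \<longrightarrow> r_map ?p ?q \<xi> i = undefined" by (auto simp: r_map_def)
  show ?thesis unfolding Rg_def r_mor_def is_dmor_def f_def[symmetric]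
    using rx ry rm rm2 rm3 pc by simp
qed


lemma Rg_dcomp:
  assumes cat: "is_category C" and m: "is_dmor C (X,\<xi>,Y)" and n: "is_dmor C (Y,\<eta>,Z)"
    and g: "g \<in> Mor C" "Dom C g = sup_ob Z"
  shows "Rg C T g (dcomp (Y,\<eta>,Z) (X,\<xi>,Y)) = dcomp (Rg C T g (Y,\<eta>,Z)) (Rg C T (Cmp C g (sup_mor (Y,\<eta>,Z))) (X,\<xi>,Y))"
proof -
  note a = dmorD[OF m] and b = dmorD[OF n]
  have as: "Cmp C g (Cmp C (sup_mor (Y,\<eta>,Z)) (sup_mor (X,\<xi>,Y))) = Cmp C (Cmp C g (sup_mor (Y,\<eta>,Z))) (sup_mor (X,\<xi>,Y))"
    using sup_mor_typ[OF m] sup_mor_typ[OF n] g by (intro cat_assoc[OF cat]) auto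
  have rm: "(\<lambda>i. if i \<le> Suc (qdim X) then r_map (qdim Y) (qdim Z) \<eta> (r_map (qdim X) (qdim Y) \<xi> i) else undefined)
     = r_map (qdim X) (qdim Z) (\<lambda>i. if i \<le> qdim X then \<eta> (\<xi> i) else undefined)"
    using a(3) by (auto intro!: ext simp: r_map_def)
  show ?thesis
    unfolding Rg_def r_mor_def
    apply (simp add: sup_dcomp[OF cat m n] as)
    apply (simp add: dcomp_def rm)
    done
qed


lemma Rg_sec:
  assumes cat: "is_category C" and X: "is_simplex C X" and s1: "\<forall>i \<le> Suc (qdim X). s i \<le> qdim X"
    and s2: "\<forall>i j. i \<le> j \<and> j \<le> Suc (qdim X) \<longrightarrow> s i \<le> s j"
    and s3: "\<forall>k \<le> qdim X. \<exists>i \<le> Suc (qdim X). s i = k"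
    and d1: "\<forall>i \<le> qdim X. d i \<le> Suc (qdim X)"
    and d2: "\<forall>i j. i \<le> j \<and> j \<le> qdim X \<longrightarrow> d i \<le> d j"
    and d3: "\<forall>i \<le> qdim X. s (d i) = i"
    and g: "g \<in> Mor C" "Dom C g = sob X (qdim X)"
  shows "Rg C T g (X, (\<lambda>i. if i \<le> qdim X then d i else undefined), precomp X s (Suc (qdim X))) =
    (r_obj C T X g, (\<lambda>i. if i \<le> Suc (qdim X) then r_map (qdim X) (Suc (qdim X)) d i else undefined),
     precomp (r_obj C T X g) (r_map (Suc (qdim X)) (qdim X) s) (Suc (Suc (qdim X))))"
proof -
  let ?q = "qdim X" and ?Z = "precomp X s (Suc (qdim X))"
  have qZ: "qdim ?Z = Suc ?q" by (simp add: precomp_def qdim_def)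
  have st: "s (Suc ?q) = ?q" using s_top[OF s1 s2 s3] .
  have sup: "sup_mor (X, (\<lambda>i. if i \<le> qdim X then d i else undefined), ?Z) = Idt C (sob X ?q)"
    using elem_dmor(2)[OF X s1 s2 s3 d1 d2 d3] .
  have c: "Cmp C g (Idt C (sob X ?q)) = g" using cat_idr[OF cat g(1)] g(2) by simp
  have rm: "r_map ?q (Suc ?q) (\<lambda>i. if i \<le> qdim X then d i else undefined) =
     (\<lambda>i. if i \<le> Suc (qdim X) then r_map (qdim X) (Suc (qdim X)) d i else undefined)"
    by (auto intro!: ext simp: r_map_def)
  have zs: "\<And>i. sob ?Z i = (if i \<le> Suc ?q then sob X (s i) else undefined)" by (simp add: precomp_def sob_def)
  have za: "\<And>i j. sar ?Z i j = (if i \<le> j \<and> j \<le> Suc ?q then sar X (s i) (s j) else undefined)" by (simp add: precomp_def sar_def)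
  have ro: "r_obj C T ?Z g = precomp (r_obj C T X g) (r_map (Suc (qdim X)) (qdim X) s) (Suc (Suc (qdim X)))"
    unfolding precomp_def[of "r_obj C T X g"] r_obj_def[of C T ?Z g] qZ
  proof (simp, intro conjI ext)
    fix i show "(if i \<le> Suc ?q then sob ?Z i else if i = Suc (Suc ?q) then T else undefined) =
         (if i \<le> Suc (Suc ?q) then sob (r_obj C T X g) (r_map (Suc ?q) ?q s i) else undefined)"
      using s1 st by (auto simp: zs r_sob r_map_def)
  next
    fix i j show "(if i \<le> j \<and> j \<le> Suc ?q then sar ?Z i j
          else if i \<le> Suc ?q \<and> j = Suc (Suc ?q) then Cmp C g (sar ?Z i (Suc ?q))
               else if i = Suc (Suc ?q) \<and> j = Suc (Suc ?q) then Idt C T else undefined) =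
         (if i \<le> j \<and> j \<le> Suc (Suc ?q) then sar (r_obj C T X g) (r_map (Suc ?q) ?q s i) (r_map (Suc ?q) ?q s j) else undefined)"
      using s1 s2 st by (auto simp: za r_sar r_map_def)
  qed
  show ?thesis unfolding Rg_def r_mor_def using sup c rm ro qZ by simp
qed


lemma Rg_elem:
  assumes cat: "is_category C" and T: "T \<in> Obj C" and e: "elem_equiv C m m'"
    and g: "g \<in> Mor C" "Dom C g = sup_ob (snd (snd m))" "Cod C g = T"
  shows "elem_equiv C (Rg C T g m) (Rg C T g m')"
proof -
  obtain X s d d' where H: "is_simplex C X"
        "(\<forall>i \<le> Suc (qdim X). s i \<le> qdim X)"
        "(\<forall>i j. i \<le> j \<and> j \<le> Suc (qdim X) \<longrightarrow> s i \<le> s j)"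
        "(\<forall>k \<le> qdim X. \<exists>i \<le> Suc (qdim X). s i = k)"
        "(\<forall>i \<le> qdim X. d i \<le> Suc (qdim X) \<and> d' i \<le> Suc (qdim X))"
        "(\<forall>i j. i \<le> j \<and> j \<le> qdim X \<longrightarrow> d i \<le> d j \<and> d' i \<le> d' j)"
        "(\<forall>i \<le> qdim X. s (d i) = i \<and> s (d' i) = i)"
        "m = (X, (\<lambda>i. if i \<le> qdim X then d i else undefined), precomp X s (Suc (qdim X)))"
        "m' = (X, (\<lambda>i. if i \<le> qdim X then d' i else undefined), precomp X s (Suc (qdim X)))"
    using e unfolding elem_equiv_def by blast
  let ?q = "qdim X"
  have st: "s (Suc ?q) = ?q" using s_top[OF H(2-4)] .
  have gd: "Dom C g = sob X ?q" using g(2) st H(8) by (simp add: sup_ob_def precomp_def sob_def qdim_def)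
  have d1: "\<forall>i \<le> qdim X. d i \<le> Suc (qdim X)" "\<forall>i \<le> qdim X. d' i \<le> Suc (qdim X)" using H(5) by auto
  have d2: "\<forall>i j. i \<le> j \<and> j \<le> qdim X \<longrightarrow> d i \<le> d j" "\<forall>i j. i \<le> j \<and> j \<le> qdim X \<longrightarrow> d' i \<le> d' j" using H(6) by auto
  have d3: "\<forall>i \<le> qdim X. s (d i) = i" "\<forall>i \<le> qdim X. s (d' i) = i" using H(7) by auto
  have E1: "Rg C T g m = (r_obj C T X g, (\<lambda>i. if i \<le> Suc ?q then r_map ?q (Suc ?q) d i else undefined),
     precomp (r_obj C T X g) (r_map (Suc ?q) ?q s) (Suc (Suc ?q)))"
    unfolding H(8) by (rule Rg_sec[OF cat H(1-4) d1(1) d2(1) d3(1) g(1) gd])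
  have E2: "Rg C T g m' = (r_obj C T X g, (\<lambda>i. if i \<le> Suc ?q then r_map ?q (Suc ?q) d' i else undefined),
     precomp (r_obj C T X g) (r_map (Suc ?q) ?q s) (Suc (Suc ?q)))"
    unfolding H(9) by (rule Rg_sec[OF cat H(1-4) d1(2) d2(2) d3(2) g(1) gd])
  have X': "is_simplex C (r_obj C T X g)" using r_simplex[OF cat T H(1) g(1) gd g(3)] .
  let ?s = "r_map (Suc ?q) ?q s" and ?D = "r_map ?q (Suc ?q) d" and ?D' = "r_map ?q (Suc ?q) d'"
  have c1: "\<forall>i \<le> Suc (Suc ?q). ?s i \<le> Suc ?q" using H(2) by (auto simp: r_map_def le_Suc_eq)
  have c2: "\<forall>i j. i \<le> j \<and> j \<le> Suc (Suc ?q) \<longrightarrow> ?s i \<le> ?s j" using H(2,3) by (auto simp: r_map_def le_Suc_eq)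
  have c3: "\<forall>k \<le> Suc ?q. \<exists>i \<le> Suc (Suc ?q). ?s i = k"
  proof (intro allI impI)
    fix k assume k: "k \<le> Suc ?q"
    show "\<exists>i \<le> Suc (Suc ?q). ?s i = k"
    proof (cases "k \<le> ?q")
      case True then obtain i where "i \<le> Suc ?q" "s i = k" using H(4) by blast
      then show ?thesis by (intro exI[of _ i]) (auto simp: r_map_def)
    next
      case False then show ?thesis using k by (intro exI[of _ "Suc (Suc ?q)"]) (auto simp: r_map_def)
    qed
  qed
  have c4: "\<forall>i \<le> Suc ?q. ?D i \<le> Suc (Suc ?q) \<and> ?D' i \<le> Suc (Suc ?q)" using d1 by (auto simp: r_map_def le_Suc_eq)
  have c5: "\<forall>i j. i \<le> j \<and> j \<le> Suc ?q \<longrightarrow> ?D i \<le> ?D j \<and> ?D' i \<le> ?D' j" using d1 d2 by (auto simp: r_map_def le_Suc_eq)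
  have c6: "\<forall>i \<le> Suc ?q. ?s (?D i) = i \<and> ?s (?D' i) = i" using d1 d3 by (auto simp: r_map_def le_Suc_eq)
  show ?thesis unfolding elem_equiv_def
    apply (rule exI[of _ "r_obj C T X g"], rule exI[of _ ?s], rule exI[of _ ?D], rule exI[of _ ?D'])
    using X' c1 c2 c3 c4 c5 c6 E1 E2 by simp
qed


lemma Rg_dequiv:
  assumes cat: "is_category C" and T: "T \<in> Obj C" and e: "dequiv C m m'"
  shows "\<forall>g. g \<in> Mor C \<and> Dom C g = sup_ob (snd (snd m)) \<and> Cod C g = T \<longrightarrow> dequiv C (Rg C T g m) (Rg C T g m')"
  using e
proof induction
  case (elem m m') then show ?case using Rg_elem[OF cat T] dequiv.elem by blast
next
  case (refl m)
  obtain X \<xi> Y where m: "m = (X,\<xi>,Y)" by (cases m) auto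
  show ?case unfolding m
  proof (intro allI impI)
    fix g assume "g \<in> Mor C \<and> Dom C g = sup_ob (snd (snd (X,\<xi>,Y))) \<and> Cod C g = T"
    then have "is_dmor C (Rg C T g (X,\<xi>,Y))" using Rg_dmor[OF cat T] refl unfolding m by auto
    then show "dequiv C (Rg C T g (X,\<xi>,Y)) (Rg C T g (X,\<xi>,Y))" by (rule dequiv.refl)
  qed
next
  case (sym m m') then show ?case using dequiv_inv[OF cat sym(1)] dequiv.sym by metis
next
  case (trans m m' m'') then show ?case using dequiv_inv[OF cat trans(1)] dequiv.trans by metis
next
  case (comp_left m m' n)
  obtain X \<xi> Y where m: "m = (X,\<xi>,Y)" by (cases m) auto
  obtain X' \<xi>' Y' where m': "m' = (X',\<xi>',Y')" by (cases m') auto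
  obtain Y2 \<eta> Z where n: "n = (Y2,\<eta>,Z)" by (cases n) auto
  have inv: "is_dmor C m \<and> is_dmor C m' \<and> fst m = fst m' \<and> snd (snd m) = snd (snd m') \<and> sup_mor m = sup_mor m'"
    using dequiv_inv[OF cat comp_left(1)] .
  from comp_left inv m m' n have e: "X' = X" "Y' = Y" "Y2 = Y" by auto
  have h: "is_dmor C (X,\<xi>,Y)" "is_dmor C (X,\<xi>',Y)" "is_dmor C (Y,\<eta>,Z)"
    using comp_left inv unfolding m m' n e by auto
  show ?case
  proof (intro allI impI)
    fix g assume g: "g \<in> Mor C \<and> Dom C g = sup_ob (snd (snd (dcomp n m))) \<and> Cod C g = T"
    then have g': "g \<in> Mor C" "Dom C g = sup_ob Z" "Cod C g = T" by (auto simp: n m dcomp_def)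
    note st = sup_mor_typ[OF h(3)]
    let ?g = "Cmp C g (sup_mor (Y,\<eta>,Z))"
    have gg: "?g \<in> Mor C \<and> Dom C ?g = sup_ob (snd (snd m)) \<and> Cod C ?g = T"
      using cat_cmp[OF cat] st g' by (auto simp: m)
    have "dequiv C (Rg C T ?g m) (Rg C T ?g m')" using comp_left.IH gg by blast
    then have "dequiv C (dcomp (Rg C T g (Y,\<eta>,Z)) (Rg C T ?g (X,\<xi>,Y))) (dcomp (Rg C T g (Y,\<eta>,Z)) (Rg C T ?g (X,\<xi>',Y)))"
      unfolding m m' e
      by (rule dequiv.comp_left[OF _ Rg_dmor[OF cat T h(3) g']]) (simp add: Rg_def r_mor_def)
    then show "dequiv C (Rg C T g (dcomp n m)) (Rg C T g (dcomp n m'))"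
      unfolding m m' n e Rg_dcomp[OF cat h(1,3) g'(1,2)] Rg_dcomp[OF cat h(2,3) g'(1,2)] .
  qed
next
  case (comp_right m m' k)
  obtain Y \<xi> Z where m: "m = (Y,\<xi>,Z)" by (cases m) auto
  obtain Y' \<xi>' Z' where m': "m' = (Y',\<xi>',Z')" by (cases m') auto
  obtain X \<eta> Y2 where k: "k = (X,\<eta>,Y2)" by (cases k) auto
  have inv: "is_dmor C m \<and> is_dmor C m' \<and> fst m = fst m' \<and> snd (snd m) = snd (snd m') \<and> sup_mor m = sup_mor m'"
    using dequiv_inv[OF cat comp_right(1)] .
  from comp_right inv m m' k have e: "Y' = Y" "Z' = Z" "Y2 = Y" by auto
  have h: "is_dmor C (Y,\<xi>,Z)" "is_dmor C (Y,\<xi>',Z)" "is_dmor C (X,\<eta>,Y)" and sm: "sup_mor (Y,\<xi>',Z) = sup_mor (Y,\<xi>,Z)"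
    using comp_right inv unfolding m m' k e by auto
  show ?case
  proof (intro allI impI)
    fix g assume g: "g \<in> Mor C \<and> Dom C g = sup_ob (snd (snd (dcomp m k)))  \<and> Cod C g = T"
    then have g': "g \<in> Mor C" "Dom C g = sup_ob Z" "Cod C g = T" by (auto simp: k m dcomp_def)
    note st = sup_mor_typ[OF h(1)]
    let ?g = "Cmp C g (sup_mor (Y,\<xi>,Z))"
    have gg: "?g \<in> Mor C" "Dom C ?g = sup_ob Y" "Cod C ?g = T"
      using cat_cmp[OF cat] st g' by auto
    have "dequiv C (Rg C T g m) (Rg C T g m')" using comp_right.IH g' by (auto simp: m)
    then have "dequiv C (dcomp (Rg C T g (Y,\<xi>,Z)) (Rg C T ?g (X,\<eta>,Y))) (dcomp (Rg C T g (Y,\<xi>',Z)) (Rg C T ?g (X,\<eta>,Y)))"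
      unfolding m m' e
      by (rule dequiv.comp_right[OF _ Rg_dmor[OF cat T h(3) gg]]) (simp add: Rg_def r_mor_def)
    then show "dequiv C (Rg C T g (dcomp m k)) (Rg C T g (dcomp m' k))"
      unfolding m m' k e Rg_dcomp[OF cat h(3,1) g'(1,2)] Rg_dcomp[OF cat h(3,2) g'(1,2)] sm .
  qed
qed

theorem lemma30:
  fixes C :: "('o, 'm) category" and T :: 'o
    and X Y :: "('o, 'm) simplex" and f g :: 'm and \<xi> \<xi>' :: "nat \<Rightarrow> nat"
  assumes "is_category C"
    and "T \<in> Obj C"
    and "fiber_mor C T X f \<xi> Y g"
    and "fiber_mor C T X f \<xi>' Y g"
    and "dequiv C (X, \<xi>, Y) (X, \<xi>', Y)"
  shows "dequiv C (r_mor C T X f \<xi> Y g) (r_mor C T X f \<xi>' Y g)"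
proof -
  have g: "g \<in> Mor C \<and> Dom C g = sup_ob (snd (snd (X,\<xi>,Y))) \<and> Cod C g = T"
    using assms(3) by (auto simp: fiber_mor_def fiber_obj_def)
  have "dequiv C (Rg C T g (X,\<xi>,Y)) (Rg C T g (X,\<xi>',Y))"
    using Rg_dequiv[OF assms(1,2,5)] g by blast
  moreover have "Rg C T g (X,\<xi>,Y) = r_mor C T X f \<xi> Y g" "Rg C T g (X,\<xi>',Y) = r_mor C T X f \<xi>' Y g"
    using assms(3,4) by (auto simp: Rg_def fiber_mor_def)
  ultimately show ?thesis by simp
qed

end
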